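(* Assume (A1)–(A3). Fix sequences $(E_m)_{m\ge0},(K_m)_{m\ge0}\subset\mathbb N$ with $E_{\max}=\sup_mE_m<\infty$, $K_{\max}=\sup_mK_m<\infty$, $E_{\min}=\inf_mE_m$, $K_{\min}=\inf_mK_m$. For $M\in\mathbb N$ let $T=\sum_{m=0}^MK_mE_m$. Let $\delta,\gamma>1$ with $\gamma^2<\delta$ and set $\hat\gamma=\gamma^2/\delta<1$. Consider mini-batch SGD with, for $m\in[0:M]$ and $t\in S_m$, $$b_t=\delta^{m\lceil t/\sum_{k=0}^mK_kE_k\rceil}b_0,\qquad \eta_t=\gamma^{m\lceil t/\sum_{k=0}^mK_kE_k\rceil}\eta_0$$ ($b_0,\eta_0>0$), and assume $\eta_t\in[\eta_{\min},\eta_{\max}]\subset[0,\frac2{\bar L})$. Then for all $M\in\mathbb N$, $$\min_{t\in[0:T-1]}\mathbb E\big[\|\nabla f(\theta_t)\|^2\big]\le\frac{2(f(\theta_0)-\underline f^\star)}{2-\bar L\eta_{\max}}B_T+\frac{\bar L\sigma^2}{2-\bar L\eta_{\max}}V_T,$$ where $B_T=\frac1{\sum_{t=0}^{T-1}\eta_t}\le\frac{\delta}{\eta_0K_{\min}E_{\min}\gamma^M}$ and $V_T=\frac1{\sum_{t=0}^{T-1}\eta_t}\sum_{t=0}^{T-1}\frac{\eta_t^2}{b_t}\le\frac{K_{\max}E_{\max}\eta_0\delta}{K_{\min}E_{\min}b_0(1-\hat\gamma)\gamma^M}$. Consequently $\min_{t\in[0:T-1]}\mathbb E[\|\nabla 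f(\theta_t)\|]=O(1/\gamma^{M/2})$.
   Context: Setting: $f_1,\dots,f_n:\mathbb R^d\to\mathbb R$, $f=\frac1n\sum_if_i$. (A1) each $f_i$ differentiable and $L_i$-smooth ($\nabla f_i$ $L_i$-Lipschitz, $L_i>0$), $f_i^\star:=\inf f_i\in\mathbb R$. (A2) $\xi$ a random variable independent of $\theta$, stochastic gradient $\nabla f_\xi$ with $\mathbb E_\xi[\nabla f_\xi(\theta)]=\nabla f(\theta)$, $\mathbb E_\xi\|\nabla f_\xi(\theta)-\nabla f(\theta)\|^2\le\sigma^2$ for all $\theta$. (A3) for batch size $b$, $(\xi_1,\dots,\xi_b)$ i.i.d. copies of $\xi$ independent of $\theta$, $\nabla f_B(\theta)=\frac1b\sum_{i=1}^b\nabla f_{\xi_i}(\theta)$. Mini-batch SGD: from $\theta_0$, at step $t$ draw $\xi_t=(\xi_{t,1},\dots,\xi_{t,b_t})$ as in (A3), independent of $\theta_t$ and earlier draws, set $\theta_{t+1}=\theta_t-\eta_t\frac1{b_t}\sum_{i=1}^{b_t}\nabla f_{\xi_{t,i}}(\theta_t)$. $\mathbb E$ total expectation; $\bar L=\frac1n\sum L_i$, $\underline f^\star=\frac1n\sum f_i^\star$; $[0:N]=\{0,\dots,N\}$. Stages: $E_m$ epochs and $K_m$ steps per epoch in stage $m$; $S_0=\{t\in\mathbb Z_{\ge0}:t<K_0E_0\}$, $S_m=\{t\in\mathbb Z_{\ge0}:\sum_{k=0}^{m-1}K_kE_k\le t<\sum_{k=0}^mK_kE_k\}$. $O(\cdot)$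 is as $M\to\infty$. *)

theory Defs
  imports "HOL-Probability.Probability"
begin

text \<open>End (exclusive) of stage m: sum_{k=0}^m K_k E_k.  Also T = stage_end K E M.\<close>
definition stage_end :: "(nat \<Rightarrow> nat) \<Rightarrow> (nat \<Rightarrow> nat) \<Rightarrow> nat \<Rightarrow> nat" where
  "stage_end K E m = (\<Sum>k\<le>m. K k * E k)"

definition stage :: "(nat \<Rightarrow> nat) \<Rightarrow> (nat \<Rightarrow> nat) \<Rightarrow> nat \<Rightarrow> nat set" where
  "stage K E m = {t. (\<Sum>k<m. K k * E k) \<le> t \<and> t < stage_end K E m}"

definition sched_exp :: "(nat \<Rightarrow> nat) \<Rightarrow> (nat \<Rightarrow> nat) \<Rightarrow> nat \<Rightarrow> nat \<Rightarrow> nat" where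
  "sched_exp K E m t = m * nat \<lceil>real t / real (stage_end K E m)\<rceil>"

fun sgd_iter :: "'a::real_normed_vector \<Rightarrow> (nat \<Rightarrow> real) \<Rightarrow> (nat \<Rightarrow> nat)
    \<Rightarrow> ('b \<Rightarrow> 'a \<Rightarrow> 'a) \<Rightarrow> (nat \<Rightarrow> nat \<Rightarrow> 'w \<Rightarrow> 'b) \<Rightarrow> nat \<Rightarrow> 'w \<Rightarrow> 'a" where
  "sgd_iter \<theta>0 \<eta> b G \<xi> 0 \<omega> = \<theta>0"
| "sgd_iter \<theta>0 \<eta> b G \<xi> (Suc t) \<omega> =
     sgd_iter \<theta>0 \<eta> b G \<xi> t \<omega>
     - (\<eta> t / real (b t)) *\<^sub>R (\<Sum>i<b t. G (\<xi> t i \<omega>) (sgd_iter \<theta>0 \<eta> b G \<xi> t \<omega>))"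

end

theory Submission
  imports Defs
begin

lemma descent_single:
  fixes f :: "'a::euclidean_space \<Rightarrow> real" and g :: "'a \<Rightarrow> 'a"
  assumes fd: "\<forall>x. (f has_derivative (\<lambda>h. g x \<bullet> h)) (at x)"
    and lip: "\<forall>x y. norm (g x - g y) \<le> L * norm (x - y)" and L0: "L \<ge> 0"
  shows "f y \<le> f x + g x \<bullet> (y - x) + L / 2 * (norm (y - x))\<^sup>2"
proof -
  define d where "d = y - x"
  define \<phi> where "\<phi> s = f (x + s *\<^sub>R d) - s * (g x \<bullet> d) - L / 2 * s\<^sup>2 * (norm d)\<^sup>2" for s :: real
  have D: "DERIV \<phi> s :> (g (x + s *\<^sub>R d) \<bullet> d - g x \<bullet> d - L * s * (norm d)\<^sup>2)" for s
  proof -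
    have h1: "((\<lambda>s. x + s *\<^sub>R d) has_derivative (\<lambda>h. h *\<^sub>R d)) (at s)"
      by (auto intro!: derivative_eq_intros)
    have h2: "((\<lambda>s. f (x + s *\<^sub>R d)) has_derivative (\<lambda>h. g (x + s *\<^sub>R d) \<bullet> (h *\<^sub>R d))) (at s)"
      using has_derivative_compose[OF h1 fd[rule_format, of "x + s *\<^sub>R d"]] by simp
    have h3: "((\<lambda>s. f (x + s *\<^sub>R d)) has_real_derivative (g (x + s *\<^sub>R d) \<bullet> d)) (at s)"
    proof -
      have e: "(\<lambda>h. h * (g (x + s *\<^sub>R d) \<bullet> d)) = (*) (g (x + s *\<^sub>R d) \<bullet> d)"
        by (auto simp: fun_eq_iff)
      show ?thesis using h2 e by (simp add: has_field_derivative_def)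
    qed
    show ?thesis unfolding \<phi>_def
      by (rule h3 derivative_eq_intros refl | simp add: power2_eq_square algebra_simps)+
  qed
  have "\<phi> 1 \<le> \<phi> 0"
  proof (rule DERIV_nonpos_imp_nonincreasing[of 0 1])
    fix s :: real assume s: "0 \<le> s" "s \<le> 1"
    have "g (x + s *\<^sub>R d) \<bullet> d - g x \<bullet> d = (g (x + s *\<^sub>R d) - g x) \<bullet> d" by (simp add: inner_diff_left)
    also have "\<dots> \<le> norm (g (x + s *\<^sub>R d) - g x) * norm d" by (rule norm_cauchy_schwarz)
    also have "\<dots> \<le> L * norm (s *\<^sub>R d) * norm d"
      using lip[rule_format, of "x + s *\<^sub>R d" x] by (simp add: mult_right_mono)
    also have "\<dots> = L * s * (norm d)\<^sup>2" using s by (simp add: power2_eq_square)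
    finally show "\<exists>y. DERIV \<phi> s :> y \<and> y \<le> 0" using D by (intro exI[of _ "_"] conjI) auto
  qed simp
  then show ?thesis unfolding \<phi>_def d_def by (simp add: algebra_simps)
qed


definition Pst :: "(nat \<Rightarrow> nat) \<Rightarrow> (nat \<Rightarrow> nat) \<Rightarrow> nat \<Rightarrow> nat" where
  "Pst K E m = (\<Sum>k<m. K k * E k)"

lemma stage_end_Pst: "stage_end K E m = Pst K E (Suc m)"
  unfolding stage_end_def Pst_def by (simp add: lessThan_Suc_atMost)

lemma stage_iff: "t \<in> stage K E m \<longleftrightarrow> Pst K E m \<le> t \<and> t < Pst K E (Suc m)"
  unfolding stage_def Pst_def stage_end_def by (simp add: lessThan_Suc_atMost)

lemma Pst_Suc: "Pst K E (Suc m) = Pst K E m + K m * E m"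
  unfolding Pst_def by simp

lemma Pst_ge: assumes "\<forall>m. E m > 0 \<and> K m > 0" shows "Pst K E m \<ge> m"
proof (induction m)
  case (Suc m)
  have h: "K m * E m > 0" using assms by simp
  show ?case using Suc h unfolding Pst_Suc by linarith
qed simp

lemma Pst_mono: "m \<le> m' \<Longrightarrow> Pst K E m \<le> Pst K E m'"
  unfolding Pst_def by (rule sum_mono2) auto

lemma Pst_less: assumes "\<forall>m. E m > 0 \<and> K m > 0" "m < m'" shows "Pst K E m < Pst K E m'"
proof -
  have "Pst K E m < Pst K E (Suc m)" using assms(1) by (simp add: Pst_Suc)
  also have "\<dots> \<le> Pst K E m'" using assms(2) by (intro Pst_mono) simp
  finally show ?thesis .
qed

lemma sched_exp_stage:
  assumes pos: "\<forall>m. E m > 0 \<and> K m > 0" and t: "t \<in> stage K E m"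
  shows "sched_exp K E m t = m"
proof (cases "m = 0")
  case True then show ?thesis by (simp add: sched_exp_def)
next
  case False
  have t1: "Pst K E m \<le> t" "t < Pst K E (Suc m)" using t stage_iff by auto
  have "t \<ge> 1" using Pst_ge[OF pos, of m] False t1 by simp
  then have "0 < real t / real (stage_end K E m)" "real t / real (stage_end K E m) \<le> 1"
    using t1 by (auto simp: stage_end_Pst)
  then have "\<lceil>real t / real (stage_end K E m)\<rceil> = 1"
    by (simp add: ceiling_eq_iff)
  then show ?thesis by (simp add: sched_exp_def)
qed

lemma ex_stage:
  assumes pos: "\<forall>m. E m > 0 \<and> K m > 0"
  shows "\<exists>m. t \<in> stage K E m"
proof -
  let ?Q = "\<lambda>m. t < Pst K E (Suc m)"
  have ex: "?Q t" using Pst_ge[OF pos, of "Suc t"] by simp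
  define m where "m = (LEAST m. ?Q m)"
  have q: "?Q m" unfolding m_def by (rule LeastI[of ?Q t, OF ex])
  have "Pst K E m \<le> t"
  proof (cases m)
    case 0 then show ?thesis by (simp add: Pst_def)
  next
    case (Suc m')
    have "\<not> ?Q m'" using Suc m_def not_less_Least[of m' ?Q] by simp
    then show ?thesis using Suc by simp
  qed
  then show ?thesis using q stage_iff by blast
qed

lemma stage_unique:
  assumes pos: "\<forall>m. E m > 0 \<and> K m > 0" and "t \<in> stage K E m" "t \<in> stage K E m'"
  shows "m = m'"
proof (rule ccontr)
  assume "m \<noteq> m'"
  then consider "m < m'" | "m' < m" by linarith
  then show False
  proof cases
    case 1
    then have "Pst K E (Suc m) \<le> Pst K E m'" by (intro Pst_mono) simp
    then show False using assms stage_iff by (metis leD le_trans)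
  next
    case 2
    then have "Pst K E (Suc m') \<le> Pst K E m" by (intro Pst_mono) simp
    then show False using assms stage_iff by (metis leD le_trans)
  qed
qed

lemma sum_stages:
  fixes \<phi> :: "nat \<Rightarrow> real"
  assumes "\<forall>m<M. \<forall>t\<in>stage K E m. \<phi> t = \<psi> m"
  shows "(\<Sum>t<Pst K E M. \<phi> t) = (\<Sum>m<M. real (K m * E m) * \<psi> m)"
  using assms
proof (induction M)
  case 0 then show ?case by (simp add: Pst_def)
next
  case (Suc M)
  have le: "Pst K E M \<le> Pst K E (Suc M)" by (simp add: Pst_Suc)
  have "(\<Sum>t<Pst K E (Suc M). \<phi> t) = (\<Sum>t<Pst K E M. \<phi> t) + (\<Sum>t\<in>{Pst K E M..<Pst K E (Suc M)}. \<phi> t)"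
    using sum.atLeastLessThan_concat[OF _ le, of 0 \<phi>] by (simp add: atLeast0LessThan)
  also have "(\<Sum>t\<in>{Pst K E M..<Pst K E (Suc M)}. \<phi> t) = (\<Sum>t\<in>{Pst K E M..<Pst K E (Suc M)}. \<psi> M)"
    using Suc.prems stage_iff by (intro sum.cong) auto
  also have "\<dots> = real (K M * E M) * \<psi> M" by (simp add: Pst_Suc)
  finally show ?case using Suc by simp
qed


lemma ennreal_div_bound:
  fixes m :: ennreal
  assumes k: "0 < k" and le: "ennreal k * m \<le> ennreal B"
  shows "m \<le> ennreal (B / k)"
proof -
  have "m = ennreal (1 / k) * (ennreal k * m)"
    using k by (simp add: mult.assoc[symmetric] ennreal_mult[symmetric])
  also have "\<dots> \<le> ennreal (1 / k) * ennreal B" by (intro mult_left_mono le) simp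
  also have "\<dots> = ennreal (B / k)" using k by (simp add: ennreal_mult'[symmetric])
  finally show ?thesis .
qed

lemma telescope_enn:
  fixes a e :: "nat \<Rightarrow> ennreal" and c d :: "nat \<Rightarrow> real"
  assumes step: "\<And>t. t < T \<Longrightarrow> a (Suc t) + ennreal (c t) * e t \<le> a t + ennreal (d t)"
    and d0: "\<And>t. d t \<ge> 0"
  shows "(\<Sum>t<T. ennreal (c t) * e t) \<le> a 0 + ennreal (\<Sum>t<T. d t)"
proof -
  have "N \<le> T \<Longrightarrow> a N + (\<Sum>t<N. ennreal (c t) * e t) \<le> a 0 + (\<Sum>t<N. ennreal (d t))" for N
  proof (induction N)
    case 0 then show ?case by simp
  next
    case (Suc N)
    then have IH: "a N + (\<Sum>t<N. ennreal (c t) * e t) \<le> a 0 + (\<Sum>t<N. ennreal (d t))" by simp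
    have "a (Suc N) + (\<Sum>t<Suc N. ennreal (c t) * e t)
        = (a (Suc N) + ennreal (c N) * e N) + (\<Sum>t<N. ennreal (c t) * e t)"
      by (simp add: ac_simps)
    also have "\<dots> \<le> (a N + ennreal (d N)) + (\<Sum>t<N. ennreal (c t) * e t)"
      using step[of N] Suc.prems by (intro add_right_mono) simp
    also have "\<dots> = (a N + (\<Sum>t<N. ennreal (c t) * e t)) + ennreal (d N)" by (simp add: ac_simps)
    also have "\<dots> \<le> (a 0 + (\<Sum>t<N. ennreal (d t))) + ennreal (d N)" using IH by (rule add_right_mono)
    also have "\<dots> = a 0 + (\<Sum>t<Suc N. ennreal (d t))" by (simp add: ac_simps)
    finally show ?case .
  qed
  from this[of T] have "a T + (\<Sum>t<T. ennreal (c t) * e t) \<le> a 0 + (\<Sum>t<T. ennreal (d t))" by simp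
  moreover have "(\<Sum>t<T. ennreal (d t)) = ennreal (\<Sum>t<T. d t)" using d0 by (simp add: sum_nonneg)
  ultimately show ?thesis by (metis add.commute add_increasing2 le_iff_add order_trans zero_le)
qed

lemma lipschitz_cont:
  fixes g :: "'a::real_normed_vector \<Rightarrow> 'b::real_normed_vector"
  assumes "\<forall>x y. norm (g x - g y) \<le> L * norm (x - y)" "L \<ge> 0"
  shows "continuous_on UNIV g"
  by (rule lipschitz_on_continuous_on[of L]) (use assms in \<open>auto intro!: lipschitz_onI simp: dist_norm\<close>)

definition Theta :: "'a::real_normed_vector \<Rightarrow> (nat \<Rightarrow> real) \<Rightarrow> (nat \<Rightarrow> nat) \<Rightarrow> ('b \<Rightarrow> 'a \<Rightarrow> 'a)
    \<Rightarrow> nat \<Rightarrow> (nat \<times> nat \<Rightarrow> 'b) \<Rightarrow> 'a" where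
  "Theta \<theta>0 \<eta> b G t w = sgd_iter \<theta>0 \<eta> b G (\<lambda>s i w. w (s, i)) t w"

lemma sgd_cong:
  "(\<forall>s<t. \<forall>i. \<xi>1 s i \<omega>1 = \<xi>2 s i \<omega>2) \<Longrightarrow> sgd_iter \<theta>0 \<eta> b G \<xi>1 t \<omega>1 = sgd_iter \<theta>0 \<eta> b G \<xi>2 t \<omega>2"
  by (induction t) auto

lemma theta_eq:
  assumes "{p. fst p < t} \<subseteq> K"
  shows "sgd_iter \<theta>0 \<eta> b G \<xi> t \<omega> = Theta \<theta>0 \<eta> b G t (restrict (\<lambda>p. (\<lambda>(t, i). \<xi> t i) p \<omega>) K)"
  unfolding Theta_def using assms by (intro sgd_cong) (auto simp: subset_iff)

lemma Theta_Suc: "Theta \<theta>0 \<eta> b G (Suc t) w = Theta \<theta>0 \<eta> b G t w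
   - (\<eta> t / real (b t)) *\<^sub>R (\<Sum>i<b t. G (w (t, i)) (Theta \<theta>0 \<eta> b G t w))"
  unfolding Theta_def by simp

locale sgd_setting =
  fixes D :: "'b measure" and G :: "'b \<Rightarrow> 'a::euclidean_space \<Rightarrow> 'a" and gF :: "'a \<Rightarrow> 'a"
    and \<sigma> :: real and PS :: "'w measure" and \<xi> :: "nat \<Rightarrow> nat \<Rightarrow> 'w \<Rightarrow> 'b"
  assumes probD: "prob_space D"
    and meas: "(\<lambda>(x, y). G x y) \<in> borel_measurable (D \<Otimes>\<^sub>M borel)"
    and unb: "\<forall>y. integrable D (\<lambda>x. G x y) \<and> (\<integral>x. G x y \<partial>D) = gF y"
    and var: "\<forall>y. (\<integral>\<^sup>+x. ennreal ((norm (G x y - gF y))\<^sup>2) \<partial>D) \<le> ennreal (\<sigma>\<^sup>2)"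
    and probPS: "prob_space PS"
    and ind: "prob_space.indep_vars PS (\<lambda>_. D) (\<lambda>(t, i). \<xi> t i) UNIV"
    and dis: "\<forall>t i. distr PS D (\<xi> t i) = D"
begin

lemma G_meas: "(\<lambda>z. G z y) \<in> borel_measurable D"
proof -
  have "(\<lambda>z. (\<lambda>(x, y). G x y) (z, y)) \<in> borel_measurable D"
    by (rule measurable_compose[OF _ meas]) simp
  then show ?thesis by simp
qed

lemma xi_meas: "\<xi> t i \<in> measurable PS D"
proof -
  interpret P: prob_space PS by (rule probPS)
  have "(\<lambda>(t, i). \<xi> t i) (t, i) \<in> measurable PS D"
    using ind unfolding P.indep_vars_def by blast
  then show ?thesis by simp
qed

lemma var_int: "integrable D (\<lambda>z. (norm (G z y - gF y))\<^sup>2)"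
  and var_le: "(\<integral>z. (norm (G z y - gF y))\<^sup>2 \<partial>D) \<le> \<sigma>\<^sup>2"
proof -
  have m: "(\<lambda>z. (norm (G z y - gF y))\<^sup>2) \<in> borel_measurable D"
    using G_meas by measurable
  have "(\<integral>\<^sup>+x. ennreal ((norm (G x y - gF y))\<^sup>2) \<partial>D) < \<infinity>"
    using var[rule_format, of y] by (simp add: le_less_trans)
  then show i: "integrable D (\<lambda>z. (norm (G z y - gF y))\<^sup>2)"
    by (intro integrableI_nonneg m) auto
  have "ennreal (\<integral>z. (norm (G z y - gF y))\<^sup>2 \<partial>D) = (\<integral>\<^sup>+x. ennreal ((norm (G x y - gF y))\<^sup>2) \<partial>D)"
    by (rule nn_integral_eq_integral[OF i, symmetric]) auto
  also have "\<dots> \<le> ennreal (\<sigma>\<^sup>2)" using var by blast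
  finally show "(\<integral>z. (norm (G z y - gF y))\<^sup>2 \<partial>D) \<le> \<sigma>\<^sup>2"
    by (subst (asm) ennreal_le_iff) auto
qed

lemma sq_int: "integrable D (\<lambda>z. (norm (G z y))\<^sup>2)"
  and sq_eq: "(\<integral>z. (norm (G z y))\<^sup>2 \<partial>D) = (\<integral>z. (norm (G z y - gF y))\<^sup>2 \<partial>D) + (norm (gF y))\<^sup>2"
proof -
  interpret prob_space D by (rule probD)
  have e: "(norm (G z y))\<^sup>2 = (norm (G z y - gF y))\<^sup>2 + 2 * ((G z y - gF y) \<bullet> gF y) + (norm (gF y))\<^sup>2" for z
    by (simp add: power2_norm_eq_inner algebra_simps inner_commute)
  have i1: "integrable D (\<lambda>z. G z y - gF y)" using unb by auto
  have i2: "integrable D (\<lambda>z. (norm (G z y - gF y))\<^sup>2 + 2 * ((G z y - gF y) \<bullet> gF y) + (norm (gF y))\<^sup>2)"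
    using var_int i1 by auto
  then show "integrable D (\<lambda>z. (norm (G z y))\<^sup>2)" unfolding e .
  have "(\<integral>z. (G z y - gF y) \<bullet> gF y \<partial>D) = 0"
    using i1 unb by (simp add: prob_space)
  then show "(\<integral>z. (norm (G z y))\<^sup>2 \<partial>D) = (\<integral>z. (norm (G z y - gF y))\<^sup>2 \<partial>D) + (norm (gF y))\<^sup>2"
    unfolding e using var_int i1 by (simp add: prob_space)
qed

lemma transfer_int:
  fixes f :: "'b \<Rightarrow> 'c::{banach, second_countable_topology}"
  assumes "f \<in> borel_measurable D"
  shows "integrable PS (\<lambda>\<omega>. f (\<xi> t i \<omega>)) \<longleftrightarrow> integrable D f"
    and "(\<integral>\<omega>. f (\<xi> t i \<omega>) \<partial>PS) = (\<integral>z. f z \<partial>D)"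
proof -
  show "integrable PS (\<lambda>\<omega>. f (\<xi> t i \<omega>)) \<longleftrightarrow> integrable D f"
    using integrable_distr_eq[OF xi_meas assms, of t i] dis by simp
  show "(\<integral>\<omega>. f (\<xi> t i \<omega>) \<partial>PS) = (\<integral>z. f z \<partial>D)"
    using integral_distr[OF xi_meas assms, of t i] dis by simp
qed


lemma G_meas_comp: "f \<in> measurable M D \<Longrightarrow> (\<lambda>w. G (f w) y) \<in> borel_measurable M"
  using measurable_compose[OF _ G_meas] by blast

lemma Gi_int: "integrable PS (\<lambda>\<omega>. G (\<xi> t i \<omega>) x)"
  and Gi_integral: "(\<integral>\<omega>. G (\<xi> t i \<omega>) x \<partial>PS) = gF x"
  using transfer_int[OF G_meas[of x], of t i] unb by auto

lemma Gsq_int: "integrable PS (\<lambda>\<omega>. (norm (G (\<xi> t i \<omega>) x))\<^sup>2)"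
  and Gsq_le: "(\<integral>\<omega>. (norm (G (\<xi> t i \<omega>) x))\<^sup>2 \<partial>PS) \<le> (norm (gF x))\<^sup>2 + \<sigma>\<^sup>2"
proof -
  have m: "(\<lambda>z. (norm (G z x))\<^sup>2) \<in> borel_measurable D" using G_meas by measurable
  show "integrable PS (\<lambda>\<omega>. (norm (G (\<xi> t i \<omega>) x))\<^sup>2)"
    using transfer_int(1)[OF m, of t i] sq_int by simp
  show "(\<integral>\<omega>. (norm (G (\<xi> t i \<omega>) x))\<^sup>2 \<partial>PS) \<le> (norm (gF x))\<^sup>2 + \<sigma>\<^sup>2"
    using transfer_int(2)[OF m, of t i] sq_eq[of x] var_le[of x] by simp
qed

lemma cross_int: "integrable PS (\<lambda>\<omega>. G (\<xi> t i \<omega>) x \<bullet> G (\<xi> t j \<omega>) x)"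
proof (rule Bochner_Integration.integrable_bound[where f="\<lambda>\<omega>. (norm (G (\<xi> t i \<omega>) x))\<^sup>2 + (norm (G (\<xi> t j \<omega>) x))\<^sup>2"])
  show "integrable PS (\<lambda>\<omega>. (norm (G (\<xi> t i \<omega>) x))\<^sup>2 + (norm (G (\<xi> t j \<omega>) x))\<^sup>2)"
    using Gsq_int by auto
  show "(\<lambda>\<omega>. G (\<xi> t i \<omega>) x \<bullet> G (\<xi> t j \<omega>) x) \<in> borel_measurable PS"
    using G_meas_comp[OF xi_meas] by measurable
  have "\<bar>a \<bullet> c\<bar> \<le> (norm a)\<^sup>2 + (norm c)\<^sup>2" for a c :: 'a
  proof -
    have "\<bar>a \<bullet> c\<bar> \<le> norm a * norm c" by (rule Cauchy_Schwarz_ineq2)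
    also have "\<dots> \<le> (norm a)\<^sup>2 + (norm c)\<^sup>2"
    proof -
      have "0 \<le> (norm a - norm c)\<^sup>2" by simp
      then have "2 * (norm a * norm c) \<le> (norm a)\<^sup>2 + (norm c)\<^sup>2" by (simp add: power2_diff)
      moreover have "0 \<le> norm a * norm c" by simp
      ultimately show ?thesis by linarith
    qed
    finally show ?thesis .
  qed
  then show "AE \<omega> in PS. norm (G (\<xi> t i \<omega>) x \<bullet> G (\<xi> t j \<omega>) x)
      \<le> norm ((norm (G (\<xi> t i \<omega>) x))\<^sup>2 + (norm (G (\<xi> t j \<omega>) x))\<^sup>2)"
    by (auto intro!: AE_I2)
qed

lemma cross_le: "(\<integral>\<omega>. G (\<xi> t i \<omega>) x \<bullet> G (\<xi> t j \<omega>) x \<partial>PS) \<le> (norm (gF x))\<^sup>2 + (if i = j then \<sigma>\<^sup>2 else 0)"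
proof (cases "i = j")
  case True
  then show ?thesis using Gsq_le[of t i x] by (simp add: power2_norm_eq_inner)
next
  case False
  interpret P: prob_space PS by (rule probPS)
  have iv: "P.indep_var (PiM {(t,i)} (\<lambda>_. D)) (\<lambda>\<omega>. restrict (\<lambda>p. (\<lambda>(t, i). \<xi> t i) p \<omega>) {(t,i)})
      (PiM {(t,j)} (\<lambda>_. D)) (\<lambda>\<omega>. restrict (\<lambda>p. (\<lambda>(t, i). \<xi> t i) p \<omega>) {(t,j)})"
    using False by (intro P.indep_var_restrict[OF ind]) auto
  have ivk: "P.indep_var borel (\<lambda>\<omega>. G (\<xi> t i \<omega>) x \<bullet> k) borel (\<lambda>\<omega>. G (\<xi> t j \<omega>) x \<bullet> k)" for k
  proof -
    have m1: "(\<lambda>w. G (w (t,i)) x \<bullet> k) \<in> borel_measurable (PiM {(t,i)} (\<lambda>_. D))"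
    proof -
      have "(\<lambda>w. G (w (t,i)) x) \<in> borel_measurable (PiM {(t,i)} (\<lambda>_. D))"
        by (rule G_meas_comp[OF measurable_component_singleton[of "(t,i)" "{(t,i)}" "\<lambda>_. D"]]) simp
      then show ?thesis by (intro borel_measurable_inner measurable_const) auto
    qed
    have m2: "(\<lambda>w. G (w (t,j)) x \<bullet> k) \<in> borel_measurable (PiM {(t,j)} (\<lambda>_. D))"
    proof -
      have "(\<lambda>w. G (w (t,j)) x) \<in> borel_measurable (PiM {(t,j)} (\<lambda>_. D))"
        by (rule G_meas_comp[OF measurable_component_singleton[of "(t,j)" "{(t,j)}" "\<lambda>_. D"]]) simp
      then show ?thesis by (intro borel_measurable_inner measurable_const) auto
    qed
    show ?thesis using P.indep_var_compose[OF iv m1 m2] by (simp add: comp_def)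
  qed
  have "(\<integral>\<omega>. G (\<xi> t i \<omega>) x \<bullet> G (\<xi> t j \<omega>) x \<partial>PS)
      = (\<integral>\<omega>. (\<Sum>k\<in>Basis. (G (\<xi> t i \<omega>) x \<bullet> k) * (G (\<xi> t j \<omega>) x \<bullet> k)) \<partial>PS)"
    by (subst euclidean_inner) (rule refl)
  also have "\<dots> = (\<Sum>k\<in>Basis. (\<integral>\<omega>. (G (\<xi> t i \<omega>) x \<bullet> k) * (G (\<xi> t j \<omega>) x \<bullet> k) \<partial>PS))"
    by (rule Bochner_Integration.integral_sum[where f="\<lambda>k \<omega>. (G (\<xi> t i \<omega>) x \<bullet> k) * (G (\<xi> t j \<omega>) x \<bullet> k)"])
       (rule P.indep_var_integrable[OF ivk]; rule integrable_inner_left; rule Gi_int)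
  also have "\<dots> = (\<Sum>k\<in>Basis. (gF x \<bullet> k) * (gF x \<bullet> k))"
  proof (rule sum.cong[OF refl])
    fix k :: 'a
    show "(\<integral>\<omega>. (G (\<xi> t i \<omega>) x \<bullet> k) * (G (\<xi> t j \<omega>) x \<bullet> k) \<partial>PS) = (gF x \<bullet> k) * (gF x \<bullet> k)"
      by (subst P.indep_var_lebesgue_integral[OF ivk]) (simp_all add: Gi_integral Gi_int)
  qed
  also have "\<dots> = (norm (gF x))\<^sup>2" unfolding power2_norm_eq_inner by (subst (2) euclidean_inner) (rule refl)
  finally show ?thesis using False by simp
qed


lemma inner_step:
  fixes F :: "'a \<Rightarrow> real"
  assumes desc: "\<forall>x y. F y \<le> F x + gF x \<bullet> (y - x) + Lb / 2 * (norm (y - x))\<^sup>2"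
    and low: "\<forall>x. fs \<le> F x"
    and bb: "bb > 0" and \<eta>0: "\<eta> \<ge> 0" and L0: "Lb \<ge> 0" and L\<eta>: "Lb * \<eta> \<le> 2"
  shows "(\<integral>\<^sup>+\<omega>. ennreal (F (x - (\<eta> / real bb) *\<^sub>R (\<Sum>i<bb. G (\<xi> t i \<omega>) x)) - fs)
            + ennreal ((\<eta> - Lb * \<eta>\<^sup>2 / 2) * (norm (gF x))\<^sup>2) \<partial>PS)
         \<le> ennreal (F x - fs) + ennreal (Lb * \<eta>\<^sup>2 * \<sigma>\<^sup>2 / (2 * real bb))"
proof -
  interpret P: prob_space PS by (rule probPS)
  define Gi where "Gi i \<omega> = G (\<xi> t i \<omega>) x" for i \<omega>
  define c where "c = \<eta> - Lb * \<eta>\<^sup>2 / 2"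
  define d where "d = Lb * \<eta>\<^sup>2 * \<sigma>\<^sup>2 / (2 * real bb)"
  define a where "a = \<eta> / real bb"
  define Q where "Q \<omega> = F x - fs - a * (\<Sum>i<bb. gF x \<bullet> Gi i \<omega>)
      + Lb / 2 * a\<^sup>2 * (\<Sum>i<bb. \<Sum>j<bb. Gi i \<omega> \<bullet> Gi j \<omega>)" for \<omega>
  have c0: "c \<ge> 0" unfolding c_def using L\<eta> \<eta>0
    by (simp add: power2_eq_square) (metis mult.assoc mult_left_mono mult_right_mono diff_ge_0_iff_ge
        le_divide_eq_numeral1(1) mult.commute mult_le_cancel_left1 order.refl)
  have d0: "d \<ge> 0" unfolding d_def using L0 bb by simp
  have pw: "F (x - a *\<^sub>R (\<Sum>i<bb. Gi i \<omega>)) - fs \<le> Q \<omega>" for \<omega>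
  proof -
    let ?v = "a *\<^sub>R (\<Sum>i<bb. Gi i \<omega>)"
    have "F (x - ?v) \<le> F x + gF x \<bullet> ((x - ?v) - x) + Lb / 2 * (norm ((x - ?v) - x))\<^sup>2"
      using desc by blast
    also have "gF x \<bullet> ((x - ?v) - x) = - a * (\<Sum>i<bb. gF x \<bullet> Gi i \<omega>)"
      by (simp add: inner_sum_right)
    also have "(norm ((x - ?v) - x))\<^sup>2 = ?v \<bullet> ?v" by (simp add: dot_square_norm)
    also have "?v \<bullet> ?v = a\<^sup>2 * (\<Sum>i<bb. \<Sum>j<bb. Gi i \<omega> \<bullet> Gi j \<omega>)"
    proof -
      have "?v \<bullet> ?v = a * (a * (\<Sum>i<bb. \<Sum>ia<bb. Gi ia \<omega> \<bullet> Gi i \<omega>))"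
        by (simp only: inner_scaleR_left inner_scaleR_right inner_sum_left inner_sum_right sum_distrib_left)
      also have "(\<Sum>i<bb. \<Sum>ia<bb. Gi ia \<omega> \<bullet> Gi i \<omega>) = (\<Sum>i<bb. \<Sum>j<bb. Gi i \<omega> \<bullet> Gi j \<omega>)"
        by (rule sum.swap)
      finally show ?thesis by (simp add: power2_eq_square)
    qed
    finally show ?thesis unfolding Q_def by simp
  qed
  have intQ: "integrable PS Q"
    unfolding Q_def Gi_def using cross_int Gi_int by auto
  have Q0: "Q \<omega> \<ge> 0" for \<omega> using pw[of \<omega>] low by (smt (verit))
  have intQ_eq: "(\<integral>\<omega>. Q \<omega> \<partial>PS) = F x - fs - a * (\<Sum>i<bb. gF x \<bullet> gF x)
      + Lb / 2 * a\<^sup>2 * (\<Sum>i<bb. \<Sum>j<bb. (\<integral>\<omega>. Gi i \<omega> \<bullet> Gi j \<omega> \<partial>PS))"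
    unfolding Q_def Gi_def using cross_int Gi_int
    by (simp add: Bochner_Integration.integral_sum Gi_integral P.prob_space)
  have ss: "(\<Sum>i<bb. \<Sum>j<bb. (\<integral>\<omega>. Gi i \<omega> \<bullet> Gi j \<omega> \<partial>PS))
      \<le> (\<Sum>i<bb. \<Sum>j<bb. (norm (gF x))\<^sup>2 + (if i = j then \<sigma>\<^sup>2 else 0))"
    unfolding Gi_def by (intro sum_mono cross_le)
  also have "\<dots> = real bb * real bb * (norm (gF x))\<^sup>2 + real bb * \<sigma>\<^sup>2"
    by (simp add: sum.distrib algebra_simps)
  finally have ss2: "(\<Sum>i<bb. \<Sum>j<bb. (\<integral>\<omega>. Gi i \<omega> \<bullet> Gi j \<omega> \<partial>PS))
      \<le> real bb * real bb * (norm (gF x))\<^sup>2 + real bb * \<sigma>\<^sup>2" .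
  have Lba: "Lb / 2 * a\<^sup>2 \<ge> 0" using L0 by simp
  have "(\<integral>\<omega>. Q \<omega> \<partial>PS) \<le> F x - fs - a * (real bb * (norm (gF x))\<^sup>2)
      + Lb / 2 * a\<^sup>2 * (real bb * real bb * (norm (gF x))\<^sup>2 + real bb * \<sigma>\<^sup>2)"
    unfolding intQ_eq using mult_left_mono[OF ss2 Lba] by (simp add: power2_norm_eq_inner)
  also have "\<dots> = F x - fs - c * (norm (gF x))\<^sup>2 + d"
    unfolding a_def c_def d_def using bb by (simp add: field_simps power2_eq_square)
  finally have intQ_le: "(\<integral>\<omega>. Q \<omega> \<partial>PS) + c * (norm (gF x))\<^sup>2 \<le> F x - fs + d" by simp
  have "(\<integral>\<^sup>+\<omega>. ennreal (F (x - a *\<^sub>R (\<Sum>i<bb. Gi i \<omega>)) - fs) + ennreal (c * (norm (gF x))\<^sup>2) \<partial>PS)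
      \<le> (\<integral>\<^sup>+\<omega>. ennreal (Q \<omega> + c * (norm (gF x))\<^sup>2) \<partial>PS)"
  proof (rule nn_integral_mono)
    fix \<omega>
    have "ennreal (F (x - a *\<^sub>R (\<Sum>i<bb. Gi i \<omega>)) - fs) + ennreal (c * (norm (gF x))\<^sup>2)
        = ennreal (F (x - a *\<^sub>R (\<Sum>i<bb. Gi i \<omega>)) - fs + c * (norm (gF x))\<^sup>2)"
      using low c0 by (intro ennreal_plus[symmetric]) auto
    also have "\<dots> \<le> ennreal (Q \<omega> + c * (norm (gF x))\<^sup>2)"
      using pw[of \<omega>] by (intro ennreal_leI) simp
    finally show "ennreal (F (x - a *\<^sub>R (\<Sum>i<bb. Gi i \<omega>)) - fs) + ennreal (c * (norm (gF x))\<^sup>2)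
        \<le> ennreal (Q \<omega> + c * (norm (gF x))\<^sup>2)" .
  qed
  also have "\<dots> = ennreal (\<integral>\<omega>. Q \<omega> + c * (norm (gF x))\<^sup>2 \<partial>PS)"
    using intQ Q0 c0 by (intro nn_integral_eq_integral) auto
  also have "(\<integral>\<omega>. Q \<omega> + c * (norm (gF x))\<^sup>2 \<partial>PS) = (\<integral>\<omega>. Q \<omega> \<partial>PS) + c * (norm (gF x))\<^sup>2"
    using intQ by (simp add: P.prob_space)
  also have "ennreal \<dots> \<le> ennreal (F x - fs + d)" using intQ_le by (intro ennreal_leI)
  also have "\<dots> = ennreal (F x - fs) + ennreal d" using low d0 by (intro ennreal_plus) auto
  finally show ?thesis unfolding Gi_def a_def c_def d_def .
qed


lemma Gcomp_meas:
  assumes "f \<in> measurable M D" "g \<in> borel_measurable M"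
  shows "(\<lambda>w. G (f w) (g w)) \<in> borel_measurable M"
  using measurable_compose[OF measurable_Pair[OF assms] meas] by simp

lemma Theta_meas:
  "{p. fst p < t} \<subseteq> K \<Longrightarrow> Theta \<theta>0 \<eta> b G t \<in> borel_measurable (PiM K (\<lambda>_. D))"
proof (induction t)
  case 0 then show ?case by (simp add: Theta_def)
next
  case (Suc t)
  have "{p. fst p < t} \<subseteq> K" using Suc.prems by auto
  then have IH: "Theta \<theta>0 \<eta> b G t \<in> borel_measurable (PiM K (\<lambda>_. D))" using Suc.IH by blast
  have c: "(t, i) \<in> K" for i using Suc.prems by auto
  have g: "(\<lambda>w. G (w (t, i)) (Theta \<theta>0 \<eta> b G t w)) \<in> borel_measurable (PiM K (\<lambda>_. D))" for i
    by (rule Gcomp_meas[OF measurable_component_singleton[OF c] IH])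
  show ?case unfolding Theta_Suc
    by (intro borel_measurable_diff IH borel_measurable_scaleR borel_measurable_const borel_measurable_sum g)
qed


lemma outer_step:
  fixes F :: "'a \<Rightarrow> real"
  assumes desc: "\<forall>x y. F y \<le> F x + gF x \<bullet> (y - x) + Lb / 2 * (norm (y - x))\<^sup>2"
    and low: "\<forall>x. fs \<le> F x"
    and F_meas: "F \<in> borel_measurable borel" and gF_meas: "gF \<in> borel_measurable borel"
    and bpos: "b t > 0" and \<eta>0: "\<eta> t \<ge> 0" and L0: "Lb \<ge> 0" and L\<eta>: "Lb * \<eta> t \<le> 2"
  shows "(\<integral>\<^sup>+\<omega>. ennreal (F (sgd_iter \<theta>0 \<eta> b G \<xi> (Suc t) \<omega>) - fs) \<partial>PS)
         + ennreal (\<eta> t - Lb * (\<eta> t)\<^sup>2 / 2) * (\<integral>\<^sup>+\<omega>. ennreal ((norm (gF (sgd_iter \<theta>0 \<eta> b G \<xi> t \<omega>)))\<^sup>2) \<partial>PS)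
       \<le> (\<integral>\<^sup>+\<omega>. ennreal (F (sgd_iter \<theta>0 \<eta> b G \<xi> t \<omega>) - fs) \<partial>PS) + ennreal (Lb * (\<eta> t)\<^sup>2 * \<sigma>\<^sup>2 / (2 * real (b t)))"
proof -
  interpret P: prob_space PS by (rule probPS)
  define K1 where "K1 = {p :: nat \<times> nat. fst p < t}"
  define K2 where "K2 = {p :: nat \<times> nat. fst p = t}"
  define M1 where "M1 = PiM K1 (\<lambda>_. D)"
  define M2 where "M2 = PiM K2 (\<lambda>_. D)"
  define A where "A \<omega> = restrict (\<lambda>p. (\<lambda>(t, i). \<xi> t i) p \<omega>) K1" for \<omega>
  define B where "B \<omega> = restrict (\<lambda>p. (\<lambda>(t, i). \<xi> t i) p \<omega>) K2" for \<omega>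
  define \<Theta> where "\<Theta> = Theta \<theta>0 \<eta> b G t"
  define c where "c = \<eta> t - Lb * (\<eta> t)\<^sup>2 / 2"
  define d where "d = Lb * (\<eta> t)\<^sup>2 * \<sigma>\<^sup>2 / (2 * real (b t))"
  define h where "h = \<eta> t / real (b t)"
  define V where "V p = \<Theta> (fst p) - h *\<^sub>R (\<Sum>i<b t. G (snd p (t, i)) (\<Theta> (fst p)))" for p
  define f1 where "f1 p = ennreal (F (V p) - fs)" for p
  define f2 where "f2 p = ennreal ((norm (gF (\<Theta> (fst p))))\<^sup>2)" for p :: "(nat \<times> nat \<Rightarrow> 'b) \<times> (nat \<times> nat \<Rightarrow> 'b)"
  define H where "H p = f1 p + ennreal c * f2 p" for p
  have c0: "c \<ge> 0" unfolding c_def using L\<eta> \<eta>0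
    by (simp add: power2_eq_square) (metis mult.assoc mult_left_mono mult_right_mono diff_ge_0_iff_ge
        le_divide_eq_numeral1(1) mult.commute mult_le_cancel_left1 order.refl)
  have iv: "P.indep_var M1 A M2 B"
    unfolding M1_def M2_def A_def B_def K1_def K2_def
    by (rule P.indep_var_restrict[OF ind]) auto
  then have Am: "A \<in> measurable PS M1" and Bm: "B \<in> measurable PS M2"
    and prod: "distr PS M1 A \<Otimes>\<^sub>M distr PS M2 B = distr PS (M1 \<Otimes>\<^sub>M M2) (\<lambda>\<omega>. (A \<omega>, B \<omega>))"
    using P.indep_var_distribution_eq by blast+
  have ABm: "(\<lambda>\<omega>. (A \<omega>, B \<omega>)) \<in> measurable PS (M1 \<Otimes>\<^sub>M M2)" using Am Bm by measurable
  have ThM: "\<Theta> \<in> borel_measurable M1" unfolding \<Theta>_def M1_def K1_def by (rule Theta_meas) simp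
  have th_t: "sgd_iter \<theta>0 \<eta> b G \<xi> t \<omega> = \<Theta> (A \<omega>)" for \<omega>
    unfolding \<Theta>_def A_def K1_def by (rule theta_eq) simp
  have B_ev: "B \<omega> (t, i) = \<xi> t i \<omega>" for \<omega> i unfolding B_def K2_def by simp
  have th_S: "sgd_iter \<theta>0 \<eta> b G \<xi> (Suc t) \<omega> = V (A \<omega>, B \<omega>)" for \<omega>
    unfolding V_def h_def by (simp add: th_t B_ev)
  have ThF: "(\<lambda>p. \<Theta> (fst p)) \<in> borel_measurable (M1 \<Otimes>\<^sub>M M2)"
    by (rule measurable_compose[OF measurable_fst ThM])
  have Gm: "(\<lambda>p. G (snd p (t, i)) (\<Theta> (fst p))) \<in> borel_measurable (M1 \<Otimes>\<^sub>M M2)" for i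
  proof (rule Gcomp_meas[OF _ ThF])
    have "(t, i) \<in> K2" unfolding K2_def by simp
    then show "(\<lambda>p. snd p (t, i)) \<in> measurable (M1 \<Otimes>\<^sub>M M2) D"
      unfolding M2_def by (rule measurable_compose[OF measurable_snd measurable_component_singleton])
  qed
  have Vm: "V \<in> borel_measurable (M1 \<Otimes>\<^sub>M M2)" unfolding V_def
    by (intro borel_measurable_diff ThF borel_measurable_scaleR borel_measurable_const borel_measurable_sum Gm)
  have FVm: "(\<lambda>p. F (V p)) \<in> borel_measurable (M1 \<Otimes>\<^sub>M M2)" by (rule measurable_compose[OF Vm F_meas])
  have gFm: "(\<lambda>p. gF (\<Theta> (fst p))) \<in> borel_measurable (M1 \<Otimes>\<^sub>M M2)" by (rule measurable_compose[OF ThF gF_meas])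
  have f1m: "f1 \<in> borel_measurable (M1 \<Otimes>\<^sub>M M2)" unfolding f1_def using FVm by measurable
  have f2m: "f2 \<in> borel_measurable (M1 \<Otimes>\<^sub>M M2)" unfolding f2_def using gFm by measurable
  have Hm: "H \<in> borel_measurable (M1 \<Otimes>\<^sub>M M2)" unfolding H_def using f1m f2m by measurable
  have "(\<integral>\<^sup>+\<omega>. ennreal (F (sgd_iter \<theta>0 \<eta> b G \<xi> (Suc t) \<omega>) - fs) \<partial>PS)
         + ennreal c * (\<integral>\<^sup>+\<omega>. ennreal ((norm (gF (sgd_iter \<theta>0 \<eta> b G \<xi> t \<omega>)))\<^sup>2) \<partial>PS)
      = (\<integral>\<^sup>+\<omega>. f1 (A \<omega>, B \<omega>) \<partial>PS) + ennreal c * (\<integral>\<^sup>+\<omega>. f2 (A \<omega>, B \<omega>) \<partial>PS)"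
    unfolding f1_def f2_def th_S th_t by simp
  also have "\<dots> = (\<integral>\<^sup>+\<omega>. H (A \<omega>, B \<omega>) \<partial>PS)"
    unfolding H_def
    using measurable_compose[OF ABm f1m] measurable_compose[OF ABm f2m]
    by (simp add: nn_integral_add nn_integral_cmult)
  also have "\<dots> = (\<integral>\<^sup>+p. H p \<partial>distr PS (M1 \<Otimes>\<^sub>M M2) (\<lambda>\<omega>. (A \<omega>, B \<omega>)))"
    using Hm ABm by (simp add: nn_integral_distr)
  also have "\<dots> = (\<integral>\<^sup>+p. H p \<partial>(distr PS M1 A \<Otimes>\<^sub>M distr PS M2 B))" by (simp add: prod)
  also have "\<dots> = (\<integral>\<^sup>+a. (\<integral>\<^sup>+z. H (a, z) \<partial>distr PS M2 B) \<partial>distr PS M1 A)"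
  proof -
    interpret Bd: prob_space "distr PS M2 B" by (rule P.prob_space_distr[OF Bm])
    have "H \<in> borel_measurable (distr PS M1 A \<Otimes>\<^sub>M distr PS M2 B)"
      using Hm by (simp add: prod)
    then show ?thesis by (rule Bd.nn_integral_fst[symmetric])
  qed
  also have "\<dots> \<le> (\<integral>\<^sup>+a. ennreal (F (\<Theta> a) - fs) + ennreal d \<partial>distr PS M1 A)"
  proof (rule nn_integral_mono)
    fix a assume "a \<in> space (distr PS M1 A)"
    then have a: "a \<in> space M1" by simp
    have Ha: "(\<lambda>z. H (a, z)) \<in> borel_measurable M2" by (rule measurable_Pair2[OF Hm a])
    have "(\<integral>\<^sup>+z. H (a, z) \<partial>distr PS M2 B) = (\<integral>\<^sup>+\<omega>. H (a, B \<omega>) \<partial>PS)"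
      using Ha Bm by (simp add: nn_integral_distr)
    also have "\<dots> = (\<integral>\<^sup>+\<omega>. ennreal (F (\<Theta> a - (\<eta> t / real (b t)) *\<^sub>R (\<Sum>i<b t. G (\<xi> t i \<omega>) (\<Theta> a))) - fs)
            + ennreal ((\<eta> t - Lb * (\<eta> t)\<^sup>2 / 2) * (norm (gF (\<Theta> a)))\<^sup>2) \<partial>PS)"
      unfolding H_def f1_def f2_def V_def h_def c_def using c0
      by (intro nn_integral_cong) (simp add: B_ev ennreal_mult c_def)
    also have "\<dots> \<le> ennreal (F (\<Theta> a) - fs) + ennreal (Lb * (\<eta> t)\<^sup>2 * \<sigma>\<^sup>2 / (2 * real (b t)))"
      by (rule inner_step[OF desc low bpos \<eta>0 L0 L\<eta>])
    finally show "(\<integral>\<^sup>+z. H (a, z) \<partial>distr PS M2 B) \<le> ennreal (F (\<Theta> a) - fs) + ennreal d"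
      unfolding d_def .
  qed
  also have "\<dots> = (\<integral>\<^sup>+\<omega>. ennreal (F (\<Theta> (A \<omega>)) - fs) + ennreal d \<partial>PS)"
  proof -
    have "(\<lambda>a. ennreal (F (\<Theta> a) - fs) + ennreal d) \<in> borel_measurable M1"
      using measurable_compose[OF ThM F_meas] by measurable
    then show ?thesis using Am by (simp add: nn_integral_distr)
  qed
  also have "\<dots> = (\<integral>\<^sup>+\<omega>. ennreal (F (sgd_iter \<theta>0 \<eta> b G \<xi> t \<omega>) - fs) \<partial>PS) + ennreal d"
  proof -
    have "(\<lambda>\<omega>. ennreal (F (\<Theta> (A \<omega>)) - fs)) \<in> borel_measurable PS"
      using measurable_compose[OF measurable_compose[OF Am ThM] F_meas] by measurable
    then show ?thesis unfolding th_t by (simp add: nn_integral_add P.emeasure_space_1)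
  qed
  finally show ?thesis unfolding c_def d_def .
qed

end


lemma alg_eq:
  fixes X A S1 S2 q :: real
  assumes "S1 \<noteq> 0" "q \<noteq> 0"
  shows "(X + A / 2 * S2) / (q / 2 * S1) = 2 * X / q * (1 / S1) + A / q * (1 / S1 * S2)"
  using assms by (simp add: field_simps)

theorem theorem3:
  fixes n :: nat
    and fs :: "nat \<Rightarrow> 'a::euclidean_space \<Rightarrow> real"
    and gfs :: "nat \<Rightarrow> 'a \<Rightarrow> 'a"
    and L :: "nat \<Rightarrow> real"
    and D :: "'b measure"
    and G :: "'b \<Rightarrow> 'a \<Rightarrow> 'a"
    and \<sigma> :: real
    and PS :: "'w measure"
    and \<xi> :: "nat \<Rightarrow> nat \<Rightarrow> 'w \<Rightarrow> 'b"
    and K E :: "nat \<Rightarrow> nat"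
    and \<delta> \<gamma> b0 \<eta>0 \<eta>min \<eta>max :: real
    and b :: "nat \<Rightarrow> nat"
    and \<eta> :: "nat \<Rightarrow> real"
    and \<theta>0 :: 'a
  defines "F \<equiv> \<lambda>x. (\<Sum>i<n. fs i x) / real n"
    and "gradF \<equiv> \<lambda>x. (1 / real n) *\<^sub>R (\<Sum>i<n. gfs i x)"
    and "Lbar \<equiv> (\<Sum>i<n. L i) / real n"
    and "fstar \<equiv> (\<Sum>i<n. Inf (range (fs i))) / real n"
    and "Emax \<equiv> real (Sup (range E))"
    and "Kmax \<equiv> real (Sup (range K))"
    and "Emin \<equiv> real (Inf (range E))"
    and "Kmin \<equiv> real (Inf (range K))"
    and "\<theta> \<equiv> sgd_iter \<theta>0 \<eta> b G \<xi>"
    and "\<gamma>hat \<equiv> \<gamma>\<^sup>2 / \<delta>"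
    and "BT \<equiv> \<lambda>M. 1 / (\<Sum>t<stage_end K E M. \<eta> t)"
    and "VT \<equiv> \<lambda>M. (1 / (\<Sum>t<stage_end K E M. \<eta> t)) * (\<Sum>t<stage_end K E M. (\<eta> t)\<^sup>2 / real (b t))"
  assumes n_pos: "n > 0"
    and A1_diff: "\<forall>i<n. \<forall>x. (fs i has_derivative (\<lambda>h. gfs i x \<bullet> h)) (at x)"
    and A1_smooth: "\<forall>i<n. L i > 0 \<and> (\<forall>x y. norm (gfs i x - gfs i y) \<le> L i * norm (x - y))"
    and A1_bdd: "\<forall>i<n. bdd_below (range (fs i))"
    and A2_prob: "prob_space D"
    and A2_meas: "(\<lambda>(x, y). G x y) \<in> borel_measurable (D \<Otimes>\<^sub>M borel)"
    and A2_unbiased: "\<forall>y. integrable D (\<lambda>x. G x y) \<and> (\<integral>x. G x y \<partial>D) = gradF y"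
    and A2_var: "\<forall>y. (\<integral>\<^sup>+x. ennreal ((norm (G x y - gradF y))\<^sup>2) \<partial>D) \<le> ennreal (\<sigma>\<^sup>2)"
    and A3_prob: "prob_space PS"
    and A3_indep: "prob_space.indep_vars PS (\<lambda>_. D) (\<lambda>(t, i). \<xi> t i) UNIV"
    and A3_distr: "\<forall>t i. distr PS D (\<xi> t i) = D"
    and E_bdd: "bdd_above (range E)"
    and K_bdd: "bdd_above (range K)"
    and EK_pos: "\<forall>m. E m > 0 \<and> K m > 0"
    and \<delta>_gt: "\<delta> > 1"
    and \<gamma>_gt: "\<gamma> > 1"
    and \<gamma>\<delta>: "\<gamma>\<^sup>2 < \<delta>"
    and b0_pos: "b0 > 0"
    and \<eta>0_pos: "\<eta>0 > 0"
    and b_sched: "\<forall>m. \<forall>t\<in>stage K E m. real (b t) = \<delta> ^ sched_exp K E m t * b0"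
    and \<eta>_sched: "\<forall>m. \<forall>t\<in>stage K E m. \<eta> t = \<gamma> ^ sched_exp K E m t * \<eta>0"
    and \<eta>min_nn: "0 \<le> \<eta>min"
    and \<eta>max_lt: "\<eta>max < 2 / Lbar"
  shows "(\<forall>M. (\<forall>t<stage_end K E M. \<eta>min \<le> \<eta> t \<and> \<eta> t \<le> \<eta>max) \<longrightarrow>
           Min ((\<lambda>t. \<integral>\<^sup>+\<omega>. ennreal ((norm (gradF (\<theta> t \<omega>)))\<^sup>2) \<partial>PS) ` {..<stage_end K E M})
             \<le> ennreal (2 * (F \<theta>0 - fstar) / (2 - Lbar * \<eta>max) * BT M
                        + Lbar * \<sigma>\<^sup>2 / (2 - Lbar * \<eta>max) * VT M)
           \<and> BT M \<le> \<delta> / (\<eta>0 * Kmin * Emin * \<gamma> ^ M)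
           \<and> VT M \<le> Kmax * Emax * \<eta>0 * \<delta> / (Kmin * Emin * b0 * (1 - \<gamma>hat) * \<gamma> ^ M))
         \<and> (\<exists>C. \<forall>M. (\<forall>t<stage_end K E M. \<eta>min \<le> \<eta> t \<and> \<eta> t \<le> \<eta>max) \<longrightarrow>
           Min ((\<lambda>t. \<integral>\<^sup>+\<omega>. ennreal (norm (gradF (\<theta> t \<omega>))) \<partial>PS) ` {..<stage_end K E M})
             \<le> ennreal (C / \<gamma> powr (real M / 2)))"
  proof -
  note F_def = assms(1) and gradF_def = assms(2) and Lbar_def = assms(3) and fstar_def = assms(4)
    and Emax_def = assms(5) and Kmax_def = assms(6) and Emin_def = assms(7) and Kmin_def = assms(8)
    and \<theta>_def = assms(9) and \<gamma>hat_def = assms(10) and BT_def = assms(11) and VT_def = assms(12)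
  have Lpos: "Lbar > 0"
  proof -
    have "(\<Sum>i<n. L i) > 0" using n_pos A1_smooth by (intro sum_pos) auto
    then show ?thesis unfolding Lbar_def using n_pos by simp
  qed
  have desc: "\<forall>x y. F y \<le> F x + gradF x \<bullet> (y - x) + Lbar / 2 * (norm (y - x))\<^sup>2"
  proof (intro allI)
    fix x y :: 'a
    have di: "fs i y \<le> fs i x + gfs i x \<bullet> (y - x) + L i / 2 * (norm (y - x))\<^sup>2" if "i < n" for i
      using descent_single[of "fs i" "gfs i" "L i"] A1_diff A1_smooth that by auto
    have "(\<Sum>i<n. fs i y) \<le> (\<Sum>i<n. fs i x + gfs i x \<bullet> (y - x) + L i / 2 * (norm (y - x))\<^sup>2)"
      using di by (intro sum_mono) auto
    also have "\<dots> = (\<Sum>i<n. fs i x) + (\<Sum>i<n. gfs i x) \<bullet> (y - x) + (\<Sum>i<n. L i) / 2 * (norm (y - x))\<^sup>2"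
      by (simp add: sum.distrib inner_sum_left sum_distrib_right sum_divide_distrib)
    finally have "(\<Sum>i<n. fs i y) / real n \<le> ((\<Sum>i<n. fs i x) + (\<Sum>i<n. gfs i x) \<bullet> (y - x) + (\<Sum>i<n. L i) / 2 * (norm (y - x))\<^sup>2) / real n"
      using n_pos by (intro divide_right_mono) auto
    then show "F y \<le> F x + gradF x \<bullet> (y - x) + Lbar / 2 * (norm (y - x))\<^sup>2"
      unfolding F_def gradF_def Lbar_def by (simp add: add_divide_distrib)
  qed
  have low: "\<forall>x. fstar \<le> F x"
  proof
    fix x
    have "(\<Sum>i<n. Inf (range (fs i))) \<le> (\<Sum>i<n. fs i x)"
      using A1_bdd by (intro sum_mono cInf_lower) auto
    then show "fstar \<le> F x" unfolding fstar_def F_def using n_pos by (simp add: divide_right_mono)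
  qed
  have F_meas: "F \<in> borel_measurable borel"
  proof -
    have "continuous_on UNIV (fs i)" if "i < n" for i
      using A1_diff that by (intro continuous_at_imp_continuous_on ballI has_derivative_continuous) blast
    then have "continuous_on UNIV F" unfolding F_def using n_pos by (auto intro!: continuous_intros)
    then show ?thesis by (rule borel_measurable_continuous_onI)
  qed
  have gF_meas: "gradF \<in> borel_measurable borel"
  proof -
    have "continuous_on UNIV (gfs i)" if "i < n" for i
      using A1_smooth that by (intro lipschitz_cont[of _ "L i"]) auto
    then have "continuous_on UNIV gradF" unfolding gradF_def by (auto intro!: continuous_intros)
    then show ?thesis by (rule borel_measurable_continuous_onI)
  qed
  interpret S: sgd_setting D G gradF \<sigma> PS \<xi>
    by (rule sgd_setting.intro[OF A2_prob A2_meas A2_unbiased A2_var A3_prob A3_indep A3_distr])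
  have st: "\<exists>m. t \<in> stage K E m" for t by (rule ex_stage[OF EK_pos])
  have eta_st: "\<eta> t = \<gamma> ^ m * \<eta>0" if "t \<in> stage K E m" for t m
    using \<eta>_sched that sched_exp_stage[OF EK_pos that] by simp
  have b_st: "real (b t) = \<delta> ^ m * b0" if "t \<in> stage K E m" for t m
    using b_sched that sched_exp_stage[OF EK_pos that] by simp
  have eta_pos: "\<eta> t > 0" for t
    using st[of t] eta_st \<gamma>_gt \<eta>0_pos by fastforce
  have b_pos: "b t > 0" for t
  proof -
    obtain m where "t \<in> stage K E m" using st by blast
    then have "real (b t) = \<delta> ^ m * b0" by (rule b_st)
    moreover have "\<delta> ^ m * b0 > 0" using \<delta>_gt b0_pos by simp
    ultimately show ?thesis by simp
  qed
  have bddK: "bdd_below (range K)" and bddE: "bdd_below (range E)"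
    by (auto intro!: bdd_belowI[of _ 0])
  have Kmin_le: "Kmin \<le> real (K m)" for m unfolding Kmin_def using bddK by (simp add: cInf_lower)
  have Emin_le: "Emin \<le> real (E m)" for m unfolding Emin_def using bddE by (simp add: cInf_lower)
  have Kmax_ge: "real (K m) \<le> Kmax" for m unfolding Kmax_def using K_bdd by (simp add: cSup_upper)
  have Emax_ge: "real (E m) \<le> Emax" for m unfolding Emax_def using E_bdd by (simp add: cSup_upper)
  have Kmin_pos: "Kmin > 0"
  proof -
    have "Inf (range K) \<in> range K" by (rule Inf_nat_def1) simp
    then show ?thesis unfolding Kmin_def using EK_pos by auto
  qed
  have Emin_pos: "Emin > 0"
  proof -
    have "Inf (range E) \<in> range E" by (rule Inf_nat_def1) simp
    then show ?thesis unfolding Emin_def using EK_pos by auto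
  qed
  have sum_eta: "(\<Sum>t<stage_end K E M. \<eta> t) = (\<Sum>m<Suc M. real (K m * E m) * (\<gamma> ^ m * \<eta>0))" for M
    unfolding stage_end_Pst by (rule sum_stages) (use eta_st in blast)
  have sum_vt: "(\<Sum>t<stage_end K E M. (\<eta> t)\<^sup>2 / real (b t))
      = (\<Sum>m<Suc M. real (K m * E m) * ((\<gamma> ^ m * \<eta>0)\<^sup>2 / (\<delta> ^ m * b0)))" for M
    unfolding stage_end_Pst by (rule sum_stages) (use eta_st b_st in simp)
  have seta_lb: "(\<Sum>t<stage_end K E M. \<eta> t) \<ge> Kmin * Emin * \<gamma> ^ M * \<eta>0" for M
  proof -
    have nn: "\<And>m. 0 \<le> real (K m * E m) * (\<gamma> ^ m * \<eta>0)" using \<gamma>_gt \<eta>0_pos by simp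
    have "Kmin * Emin * \<gamma> ^ M * \<eta>0 \<le> real (K M * E M) * (\<gamma> ^ M * \<eta>0)"
      using Kmin_le[of M] Emin_le[of M] Kmin_pos Emin_pos \<gamma>_gt \<eta>0_pos
      by (simp add: mult.assoc mult_mono)
    also have "\<dots> \<le> (\<Sum>m<Suc M. real (K m * E m) * (\<gamma> ^ m * \<eta>0))"
      by (rule member_le_sum) (use nn in auto)
    finally show ?thesis unfolding sum_eta .
  qed
  have seta_pos: "(\<Sum>t<stage_end K E M. \<eta> t) > 0" for M
    using seta_lb[of M] Kmin_pos Emin_pos \<gamma>_gt \<eta>0_pos
    by (smt (verit) mult_pos_pos zero_less_power)
  have ghat: "0 < \<gamma>hat" "\<gamma>hat < 1" unfolding \<gamma>hat_def using \<gamma>_gt \<delta>_gt \<gamma>\<delta> by auto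
  have Kmax_pos: "Kmax > 0" using Kmin_pos Kmin_le[of 0] Kmax_ge[of 0] by linarith
  have Emax_pos: "Emax > 0" using Emin_pos Emin_le[of 0] Emax_ge[of 0] by linarith
  have BT_bd: "BT M \<le> \<delta> / (\<eta>0 * Kmin * Emin * \<gamma> ^ M)" for M
  proof -
    have p: "0 < Kmin * Emin * \<gamma> ^ M * \<eta>0" using Kmin_pos Emin_pos \<gamma>_gt \<eta>0_pos by simp
    have "BT M \<le> 1 / (Kmin * Emin * \<gamma> ^ M * \<eta>0)"
      unfolding BT_def using seta_lb[of M] p by (simp add: frac_le)
    also have "\<dots> \<le> \<delta> / (Kmin * Emin * \<gamma> ^ M * \<eta>0)" using p \<delta>_gt by (simp add: divide_right_mono)
    finally show ?thesis by (simp add: ac_simps)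
  qed
  have VT_bd: "VT M \<le> Kmax * Emax * \<eta>0 * \<delta> / (Kmin * Emin * b0 * (1 - \<gamma>hat) * \<gamma> ^ M)" for M
  proof -
    have term_eq: "(\<gamma> ^ m * \<eta>0)\<^sup>2 / (\<delta> ^ m * b0) = \<gamma>hat ^ m * (\<eta>0\<^sup>2 / b0)" for m
    proof -
      have "(\<gamma> ^ m)\<^sup>2 = (\<gamma>\<^sup>2) ^ m" by (metis power_mult mult.commute)
      then show ?thesis unfolding \<gamma>hat_def using \<delta>_gt b0_pos
        by (simp add: power_divide power_mult_distrib)
    qed
    have geo: "(\<Sum>m<Suc M. \<gamma>hat ^ m) \<le> 1 / (1 - \<gamma>hat)"
    proof -
      have "(\<Sum>m<Suc M. \<gamma>hat ^ m) = (1 - \<gamma>hat ^ Suc M) / (1 - \<gamma>hat)"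
        by (subst sum_gp_strict) (use ghat in simp)
      also have "\<dots> \<le> 1 / (1 - \<gamma>hat)" using ghat by (intro divide_right_mono) auto
      finally show ?thesis .
    qed
    have sv_eq: "(\<Sum>t<stage_end K E M. (\<eta> t)\<^sup>2 / real (b t)) = (\<eta>0\<^sup>2 / b0) * (\<Sum>m<Suc M. real (K m * E m) * \<gamma>hat ^ m)"
      unfolding sum_vt term_eq sum_distrib_left by (intro sum.cong refl) (simp only: mult_ac)
    have "(\<Sum>m<Suc M. real (K m * E m) * \<gamma>hat ^ m) \<le> (\<Sum>m<Suc M. Kmax * Emax * \<gamma>hat ^ m)"
    proof (intro sum_mono mult_right_mono)
      fix m show "real (K m * E m) \<le> Kmax * Emax"
        using Kmax_ge[of m] Emax_ge[of m] by (simp add: mult_mono)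
    qed (use ghat in simp)
    also have "\<dots> = Kmax * Emax * (\<Sum>m<Suc M. \<gamma>hat ^ m)" by (simp only: sum_distrib_left)
    also have "\<dots> \<le> Kmax * Emax * (1 / (1 - \<gamma>hat))"
      using geo Kmax_pos Emax_pos by (intro mult_left_mono) auto
    finally have sv_ub0: "(\<Sum>m<Suc M. real (K m * E m) * \<gamma>hat ^ m) \<le> Kmax * Emax / (1 - \<gamma>hat)" by simp
    have sv_ub: "(\<Sum>t<stage_end K E M. (\<eta> t)\<^sup>2 / real (b t)) \<le> (\<eta>0\<^sup>2 / b0) * (Kmax * Emax / (1 - \<gamma>hat))"
      unfolding sv_eq using sv_ub0 b0_pos by (intro mult_left_mono) auto
    have sv_nn: "0 \<le> (\<Sum>t<stage_end K E M. (\<eta> t)\<^sup>2 / real (b t))" by (intro sum_nonneg) simp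
    have p: "0 < Kmin * Emin * \<gamma> ^ M * \<eta>0" using Kmin_pos Emin_pos \<gamma>_gt \<eta>0_pos by simp
    have "VT M = (\<Sum>t<stage_end K E M. (\<eta> t)\<^sup>2 / real (b t)) / (\<Sum>t<stage_end K E M. \<eta> t)"
      unfolding VT_def by simp
    also have "\<dots> \<le> (\<Sum>t<stage_end K E M. (\<eta> t)\<^sup>2 / real (b t)) / (Kmin * Emin * \<gamma> ^ M * \<eta>0)"
      using seta_lb[of M] p sv_nn by (intro divide_left_mono) auto
    also have "\<dots> \<le> (\<eta>0\<^sup>2 / b0) * (Kmax * Emax / (1 - \<gamma>hat)) / (Kmin * Emin * \<gamma> ^ M * \<eta>0)"
      using sv_ub p by (intro divide_right_mono) auto
    also have "\<dots> = Kmax * Emax * \<eta>0 / (Kmin * Emin * b0 * (1 - \<gamma>hat) * \<gamma> ^ M)"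
      using \<eta>0_pos b0_pos ghat Kmin_pos Emin_pos \<gamma>_gt by (simp add: field_simps power2_eq_square)
    also have "\<dots> \<le> Kmax * Emax * \<eta>0 * \<delta> / (Kmin * Emin * b0 * (1 - \<gamma>hat) * \<gamma> ^ M)"
    proof (rule divide_right_mono)
      show "Kmax * Emax * \<eta>0 \<le> Kmax * Emax * \<eta>0 * \<delta>"
        using Kmax_pos Emax_pos \<eta>0_pos \<delta>_gt by simp
    qed (use Kmin_pos Emin_pos b0_pos ghat \<gamma>_gt in simp)
    finally show ?thesis .
  qed
  have Lmax: "Lbar * \<eta>max < 2" using \<eta>max_lt Lpos by (simp add: field_simps)
  have T_pos: "stage_end K E M > 0" for M
    using Pst_ge[OF EK_pos, of "Suc M"] unfolding stage_end_Pst by simp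
  have main: "Min ((\<lambda>t. \<integral>\<^sup>+\<omega>. ennreal ((norm (gradF (\<theta> t \<omega>)))\<^sup>2) \<partial>PS) ` {..<stage_end K E M})
             \<le> ennreal (2 * (F \<theta>0 - fstar) / (2 - Lbar * \<eta>max) * BT M
                        + Lbar * \<sigma>\<^sup>2 / (2 - Lbar * \<eta>max) * VT M)"
    if prem: "\<forall>t<stage_end K E M. \<eta>min \<le> \<eta> t \<and> \<eta> t \<le> \<eta>max" for M
  proof -
    define T where "T = stage_end K E M"
    define e where "e t = (\<integral>\<^sup>+\<omega>. ennreal ((norm (gradF (\<theta> t \<omega>)))\<^sup>2) \<partial>PS)" for t
    define a where "a t = (\<integral>\<^sup>+\<omega>. ennreal (F (\<theta> t \<omega>) - fstar) \<partial>PS)" for t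
    define c where "c t = \<eta> t - Lbar * (\<eta> t)\<^sup>2 / 2" for t
    define d where "d t = Lbar * (\<eta> t)\<^sup>2 * \<sigma>\<^sup>2 / (2 * real (b t))" for t
    define \<kappa> where "\<kappa> = (2 - Lbar * \<eta>max) / 2"
    have \<kappa>pos: "\<kappa> > 0" unfolding \<kappa>_def using Lmax by simp
    have Leta: "Lbar * \<eta> t \<le> 2" if "t < T" for t
    proof -
      have "Lbar * \<eta> t \<le> Lbar * \<eta>max" using prem that Lpos unfolding T_def by (simp add: mult_left_mono)
      then show ?thesis using Lmax by simp
    qed
    have step: "a (Suc t) + ennreal (c t) * e t \<le> a t + ennreal (d t)" if "t < T" for t
      using S.outer_step[where b=b and t=t and \<eta>=\<eta> and Lb=Lbar and fs=fstar and F=F, OF desc low F_meas gF_meas b_pos[of t] less_imp_le[OF eta_pos[of t]] less_imp_le[OF Lpos] Leta[OF that]]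
      unfolding a_def e_def c_def d_def \<theta>_def .
    have d0: "d t \<ge> 0" for t unfolding d_def using Lpos b_pos[of t] by simp
    have tele: "(\<Sum>t<T. ennreal (c t) * e t) \<le> a 0 + ennreal (\<Sum>t<T. d t)"
      by (rule telescope_enn[where a=a and c=c and e=e and d=d, OF step d0])
    have a0: "a 0 = ennreal (F \<theta>0 - fstar)"
    proof -
      interpret P: prob_space PS by (rule A3_prob)
      show ?thesis unfolding a_def \<theta>_def by (simp add: P.emeasure_space_1)
    qed
    have c\<kappa>: "\<kappa> * \<eta> t \<le> c t" if "t < T" for t
    proof -
      have "Lbar * \<eta> t \<le> Lbar * \<eta>max" using prem that Lpos unfolding T_def by (simp add: mult_left_mono)
      then have "\<eta> t * (Lbar * \<eta> t) \<le> \<eta> t * (Lbar * \<eta>max)" using eta_pos[of t] by (simp add: mult_left_mono)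
      then show ?thesis unfolding \<kappa>_def c_def by (simp add: power2_eq_square field_simps)
    qed
    define Mn where "Mn = Min (e ` {..<T})"
    have Mn_le: "Mn \<le> e t" if "t < T" for t unfolding Mn_def using that by (intro Min_le) auto
    have "ennreal (\<kappa> * (\<Sum>t<T. \<eta> t)) * Mn = (\<Sum>t<T. ennreal (\<kappa> * \<eta> t)) * Mn"
      using \<kappa>pos eta_pos by (simp add: sum_distrib_left less_imp_le)
    also have "\<dots> = (\<Sum>t<T. ennreal (\<kappa> * \<eta> t) * Mn)" by (simp add: sum_distrib_right)
    also have "\<dots> \<le> (\<Sum>t<T. ennreal (c t) * e t)"
    proof (rule sum_mono)
      fix t assume "t \<in> {..<T}"
      then have tT: "t < T" by simp
      show "ennreal (\<kappa> * \<eta> t) * Mn \<le> ennreal (c t) * e t"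
        by (rule mult_mono[OF ennreal_leI[OF c\<kappa>[OF tT]] Mn_le[OF tT]]) simp_all
    qed
    also have "\<dots> \<le> ennreal (F \<theta>0 - fstar + (\<Sum>t<T. d t))"
    proof -
      have "(\<Sum>t<T. ennreal (c t) * e t) \<le> a 0 + ennreal (\<Sum>t<T. d t)" by (rule tele)
      also have "a 0 + ennreal (\<Sum>t<T. d t) = ennreal (F \<theta>0 - fstar + (\<Sum>t<T. d t))"
        unfolding a0 using low d0 by (intro ennreal_plus[symmetric]) (auto intro: sum_nonneg)
      finally show ?thesis .
    qed
    finally have "Mn \<le> ennreal ((F \<theta>0 - fstar + (\<Sum>t<T. d t)) / (\<kappa> * (\<Sum>t<T. \<eta> t)))"
      using \<kappa>pos seta_pos[of M] unfolding T_def by (intro ennreal_div_bound) auto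
    also have "(F \<theta>0 - fstar + (\<Sum>t<T. d t)) / (\<kappa> * (\<Sum>t<T. \<eta> t))
        = 2 * (F \<theta>0 - fstar) / (2 - Lbar * \<eta>max) * BT M + Lbar * \<sigma>\<^sup>2 / (2 - Lbar * \<eta>max) * VT M"
    proof -
      have sd: "(\<Sum>t<T. d t) = Lbar * \<sigma>\<^sup>2 / 2 * (\<Sum>t<T. (\<eta> t)\<^sup>2 / real (b t))"
        unfolding d_def sum_distrib_left by (intro sum.cong refl) (use b_pos in \<open>simp add: field_simps\<close>)
      have p1: "(\<Sum>t<T. \<eta> t) \<noteq> 0" using seta_pos[of M] unfolding T_def by simp
      have p2: "2 - Lbar * \<eta>max \<noteq> 0" using Lmax by simp
      show ?thesis unfolding sd BT_def VT_def \<kappa>_def T_def[symmetric]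
        by (rule alg_eq[OF p1 p2])
    qed
    finally show ?thesis unfolding Mn_def e_def T_def .
  qed
  have part2: "\<exists>C. \<forall>M. (\<forall>t<stage_end K E M. \<eta>min \<le> \<eta> t \<and> \<eta> t \<le> \<eta>max) \<longrightarrow>
           Min ((\<lambda>t. \<integral>\<^sup>+\<omega>. ennreal (norm (gradF (\<theta> t \<omega>))) \<partial>PS) ` {..<stage_end K E M})
             \<le> ennreal (C / \<gamma> powr (real M / 2))"
  proof (intro exI allI impI)
    fix M assume prem: "\<forall>t<stage_end K E M. \<eta>min \<le> \<eta> t \<and> \<eta> t \<le> \<eta>max"
    define g where "g = norm (gradF \<theta>0)"
    define t0 where "t0 = Pst K E M"
    have "K M * E M > 0" using EK_pos by simp
    then have t0T: "t0 < stage_end K E M" unfolding t0_def stage_end_Pst Pst_Suc by simp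
    have "t0 \<in> stage K E M" unfolding t0_def stage_iff Pst_Suc using \<open>K M * E M > 0\<close> by simp
    then have "\<eta> t0 = \<gamma> ^ M * \<eta>0" by (rule eta_st)
    moreover have "\<eta> t0 \<le> \<eta>max" using prem t0T by blast
    ultimately have "\<gamma> ^ M * \<eta>0 \<le> \<eta>max" by simp
    then have gM: "\<gamma> ^ M \<le> \<eta>max / \<eta>0" using \<eta>0_pos by (simp add: pos_le_divide_eq)
    have gp: "\<gamma> powr (real M / 2) = sqrt (\<gamma> ^ M)"
      using \<gamma>_gt by (simp add: powr_half_sqrt_powr powr_realpow)
    have sp: "sqrt (\<gamma> ^ M) > 0" using \<gamma>_gt by simp
    have sl: "sqrt (\<gamma> ^ M) \<le> sqrt (\<eta>max / \<eta>0)" using gM by simp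
    have "Min ((\<lambda>t. \<integral>\<^sup>+\<omega>. ennreal (norm (gradF (\<theta> t \<omega>))) \<partial>PS) ` {..<stage_end K E M})
        \<le> (\<integral>\<^sup>+\<omega>. ennreal (norm (gradF (\<theta> 0 \<omega>))) \<partial>PS)"
      using T_pos[of M] by (intro Min_le) auto
    also have "\<dots> = ennreal g"
    proof -
      interpret P: prob_space PS by (rule A3_prob)
      show ?thesis unfolding g_def \<theta>_def by (simp add: P.emeasure_space_1)
    qed
    also have "\<dots> \<le> ennreal (g * sqrt (\<eta>max / \<eta>0) / \<gamma> powr (real M / 2))"
    proof (rule ennreal_leI)
      have "g = g * sqrt (\<gamma> ^ M) / sqrt (\<gamma> ^ M)" using sp by (simp only: nonzero_mult_div_cancel_right less_irrefl)
      also have "\<dots> \<le> g * sqrt (\<eta>max / \<eta>0) / sqrt (\<gamma> ^ M)"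
        using sl sp unfolding g_def by (intro divide_right_mono mult_left_mono) auto
      finally show "g \<le> g * sqrt (\<eta>max / \<eta>0) / \<gamma> powr (real M / 2)" unfolding gp .
    qed
    finally show "Min ((\<lambda>t. \<integral>\<^sup>+\<omega>. ennreal (norm (gradF (\<theta> t \<omega>))) \<partial>PS) ` {..<stage_end K E M})
        \<le> ennreal (norm (gradF \<theta>0) * sqrt (\<eta>max / \<eta>0) / \<gamma> powr (real M / 2))"
      unfolding g_def .
  qed
  show ?thesis using main BT_bd VT_bd part2 by blast
qed

end
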